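(* Let $Y$ be a closed subspace of $\ell_\infty$ which is a Grothendieck space and which contains a closed subspace isomorphic to $c_0$. Then there exists an $\ell_\infty$-Grothendieck subspace of $\ell_\infty$ which is isomorphic to $Y$.
   Context: A Banach space $Z$ is a Grothendieck space if every weak$^*$-convergent sequence in $Z^*$ is weakly convergent. Let $S$ be a closed subspace of $\ell_\infty$ containing $c_0$ and let $j:c_0\to S$ be the inclusion map; $j^{**}:c_0^{**}\equiv\ell_\infty\to S^{**}$ identifies $\ell_\infty$ with a subspace of $S^{**}$. A sequence $(x_n^* )$ in $S^*$ is $\sigma(S^*,\ell_\infty)$-convergent to $x^*$ if $\langle j^{**}z,x_n^*\rangle\to\langle j^{**}z,x^*\rangle$ for every $z\in\ell_\infty$. The closed subspace $S$ of $\ell_\infty$ is an $\ell_\infty$-Grothendieck subspace if $c_0\subseteq S$ and every $\sigma(S^*,S)$-convergent sequence in $S^*$ is $\sigma(S^*,\ell_\infty)$-convergent (to the same limit). *)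

theory Defs
  imports "HOL-Analysis.Analysis"
begin

text \<open>The Banach space l_infty of bounded real sequences, realised as the type of
  bounded continuous functions on the discrete space nat (sup norm).\<close>
type_synonym linf = "nat \<Rightarrow>\<^sub>C real"

definition c0 :: "linf set" where
  "c0 = {x. (\<lambda>n. apply_bcontfun x n) \<longlonglongrightarrow> 0}"

definition unitvec :: "nat \<Rightarrow> linf" where
  "unitvec n = Bcontfun (\<lambda>k. if k = n then 1 else 0)"

definition closed_subspace :: "linf set \<Rightarrow> bool" where
  "closed_subspace S \<longleftrightarrow> subspace S \<and> closed S"

definition linear_on_set :: "'a::real_vector set \<Rightarrow> ('a \<Rightarrow> 'b::real_vector) \<Rightarrow> bool" where
  "linear_on_set S T \<longleftrightarrow>
     (\<forall>x\<in>S. \<forall>y\<in>S. T (x + y) = T x + T y) \<and> (\<forall>a. \<forall>x\<in>S. T (a *\<^sub>R x) = a *\<^sub>R T x)"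

definition isomorphic_sub :: "linf set \<Rightarrow> linf set \<Rightarrow> bool" where
  "isomorphic_sub A B \<longleftrightarrow>
     (\<exists>T. linear_on_set A T \<and> T ` A = B \<and>
          (\<exists>c C. 0 < c \<and> (\<forall>x\<in>A. c * norm x \<le> norm (T x) \<and> norm (T x) \<le> C * norm x)))"

text \<open>Dual S^* of a subspace S: bounded linear functionals on S (only their values on S matter).\<close>
definition dual_sp :: "linf set \<Rightarrow> (linf \<Rightarrow> real) set" where
  "dual_sp S = {f. linear_on_set S f \<and> (\<exists>C. \<forall>x\<in>S. \<bar>f x\<bar> \<le> C * norm x)}"

definition dual_ball :: "linf set \<Rightarrow> (linf \<Rightarrow> real) set" where
  "dual_ball S = {f \<in> dual_sp S. \<forall>x\<in>S. \<bar>f x\<bar> \<le> norm x}"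

definition bidual_sp :: "linf set \<Rightarrow> ((linf \<Rightarrow> real) \<Rightarrow> real) set" where
  "bidual_sp S = {F.
     (\<forall>f\<in>dual_sp S. \<forall>g\<in>dual_sp S. F (\<lambda>x. f x + g x) = F f + F g) \<and>
     (\<forall>a. \<forall>f\<in>dual_sp S. F (\<lambda>x. a * f x) = a * F f) \<and> (\<exists>C. \<forall>f\<in>dual_ball S. \<bar>F f\<bar> \<le> C)}"

definition weakstar_conv :: "linf set \<Rightarrow> (nat \<Rightarrow> linf \<Rightarrow> real) \<Rightarrow> (linf \<Rightarrow> real) \<Rightarrow> bool" where
  "weakstar_conv S xs x \<longleftrightarrow> (\<forall>y\<in>S. (\<lambda>n. xs n y) \<longlonglongrightarrow> x y)"

definition weak_conv :: "linf set \<Rightarrow> (nat \<Rightarrow> linf \<Rightarrow> real) \<Rightarrow> (linf \<Rightarrow> real) \<Rightarrow> bool" where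
  "weak_conv S xs x \<longleftrightarrow> (\<forall>F\<in>bidual_sp S. (\<lambda>n. F (xs n)) \<longlonglongrightarrow> F x)"

definition grothendieck :: "linf set \<Rightarrow> bool" where
  "grothendieck S \<longleftrightarrow>
     (\<forall>xs x. (\<forall>n. xs n \<in> dual_sp S) \<and> x \<in> dual_sp S \<and> weakstar_conv S xs x
        \<longrightarrow> (\<exists>y\<in>dual_sp S. weak_conv S xs y))"

text \<open>The adjoint j^* : S^* \<rightarrow> c0^* of the inclusion j : c0 \<rightarrow> S (restriction to c0).\<close>
definition j_star :: "(linf \<Rightarrow> real) \<Rightarrow> (linf \<Rightarrow> real)" where
  "j_star f = (\<lambda>x. if x \<in> c0 then f x else 0)"

text \<open>The canonical identification l_infty = c0^**: z acts on phi in c0^* by sum_n z_n phi(e_n).\<close>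
definition linf_to_c0bidual :: "linf \<Rightarrow> (linf \<Rightarrow> real) \<Rightarrow> real" where
  "linf_to_c0bidual z phi = (\<Sum>n. apply_bcontfun z n * phi (unitvec n))"

definition j_bistar :: "((linf \<Rightarrow> real) \<Rightarrow> real) \<Rightarrow> (linf \<Rightarrow> real) \<Rightarrow> real" where
  "j_bistar G = (\<lambda>f. G (j_star f))"

definition linf_conv :: "(nat \<Rightarrow> linf \<Rightarrow> real) \<Rightarrow> (linf \<Rightarrow> real) \<Rightarrow> bool" where
  "linf_conv xs x \<longleftrightarrow>
     (\<forall>z::linf. (\<lambda>n. j_bistar (linf_to_c0bidual z) (xs n)) \<longlonglongrightarrow> j_bistar (linf_to_c0bidual z) x)"

definition linf_grothendieck_subspace :: "linf set \<Rightarrow> bool" where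
  "linf_grothendieck_subspace S \<longleftrightarrow> closed_subspace S \<and> c0 \<subseteq> S \<and>
     (\<forall>xs x. (\<forall>n. xs n \<in> dual_sp S) \<and> x \<in> dual_sp S \<and> weakstar_conv S xs x
        \<longrightarrow> linf_conv xs x)"

end

theory Submission
  imports Defs "HOL-Library.Nat_Bijection"
begin


lemma HB_ext:
  fixes V :: "'a::real_normed_vector set" and f :: "'a \<Rightarrow> real"
  assumes V: "subspace V" and lin: "linear_on_set V f"
    and bd: "\<forall>x\<in>V. f x \<le> B * norm x" and B: "0 \<le> B"
  shows "\<exists>g. (\<forall>x y. g (x+y) = g x + g y) \<and> (\<forall>a x. g (a *\<^sub>R x) = a * g x)
           \<and> (\<forall>x\<in>V. g x = f x) \<and> (\<forall>x. \<bar>g x\<bar> \<le> B * norm x)"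
proof -
  define P where "P G \<longleftrightarrow> (\<forall>x\<in>V. (x, f x) \<in> G) \<and>
      (\<forall>p\<in>G. \<forall>q\<in>G. (fst p + fst q, snd p + snd q) \<in> G) \<and>
      (\<forall>p\<in>G. \<forall>c. (c *\<^sub>R fst p, c * snd p) \<in> G) \<and> (\<forall>p\<in>G. snd p \<le> B * norm (fst p))"
    for G :: "('a \<times> real) set"
  define A where "A = {G. P G}"
  define G0 where "G0 = {(x, f x) | x. x \<in> V}"
  have fadd: "f (x + y) = f x + f y" if "x \<in> V" "y \<in> V" for x y
    using lin that unfolding linear_on_set_def by auto
  have fsc: "f (c *\<^sub>R x) = c * f x" if "x \<in> V" for c x
    using lin that unfolding linear_on_set_def by auto
  have "P G0"
    unfolding P_def G0_def using bd
    by (auto simp: fadd fsc V subspace_add subspace_mul)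
  have "\<forall>C\<in>chains A. \<exists>U\<in>A. \<forall>X\<in>C. X \<subseteq> U"
  proof
    fix C assume C: "C \<in> chains A"
    show "\<exists>U\<in>A. \<forall>X\<in>C. X \<subseteq> U"
    proof (cases "C = {}")
      case True then show ?thesis using \<open>P G0\<close> A_def by auto
    next
      case False
      have CA: "\<And>X. X \<in> C \<Longrightarrow> P X" using C unfolding chains_def A_def by auto
      have ch: "\<And>X Y. X \<in> C \<Longrightarrow> Y \<in> C \<Longrightarrow> X \<subseteq> Y \<or> Y \<subseteq> X"
        using C unfolding chains_def chain_subset_def by auto
      have "P (\<Union>C)"
        unfolding P_def
      proof (intro conjI ballI allI)
        fix x assume "x \<in> V"
        obtain X where "X \<in> C" using False by auto
        then show "(x, f x) \<in> \<Union>C" using CA[of X] \<open>x \<in> V\<close> unfolding P_def by auto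
      next
        fix p q assume p: "p \<in> \<Union>C" and q: "q \<in> \<Union>C"
        then obtain X Y where X: "X \<in> C" "p \<in> X" and Y: "Y \<in> C" "q \<in> Y" by auto
        from ch[OF X(1) Y(1)] show "(fst p + fst q, snd p + snd q) \<in> \<Union>C"
        proof
          assume "X \<subseteq> Y" then show ?thesis using CA[OF Y(1)] X Y unfolding P_def by blast
        next
          assume "Y \<subseteq> X" then show ?thesis using CA[OF X(1)] X Y unfolding P_def by blast
        qed
      next
        fix p c assume "p \<in> \<Union>C"
        then obtain X where X: "X \<in> C" "p \<in> X" by auto
        then show "(c *\<^sub>R fst p, c * snd p) \<in> \<Union>C" using CA[OF X(1)] unfolding P_def by blast
      next
        fix p assume "p \<in> \<Union>C"
        then obtain X where X: "X \<in> C" "p \<in> X" by auto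
        then show "snd p \<le> B * norm (fst p)" using CA[OF X(1)] unfolding P_def by blast
      qed
      then show ?thesis unfolding A_def by auto
    qed
  qed
  from Zorn_Lemma2[OF this] obtain M where MA: "M \<in> A" and Mmax: "\<And>X. X \<in> A \<Longrightarrow> M \<subseteq> X \<Longrightarrow> X = M"
    by blast
  have PM: "P M" using MA A_def by auto
  have Madd: "(fst p + fst q, snd p + snd q) \<in> M" if "p \<in> M" "q \<in> M" for p q
    using PM that unfolding P_def by blast
  have Msc: "(c *\<^sub>R fst p, c * snd p) \<in> M" if "p \<in> M" for p c
    using PM that unfolding P_def by blast
  have Mbd: "snd p \<le> B * norm (fst p)" if "p \<in> M" for p
    using PM that unfolding P_def by blast
  have MV: "(x, f x) \<in> M" if "x \<in> V" for x
    using PM that unfolding P_def by blast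
  have M0: "(0, 0) \<in> M"
    using Msc[OF MV[OF subspace_0[OF V]], of 0] by simp
  have Mfun: "a = b" if "(x, a) \<in> M" "(x, b) \<in> M" for x a b
  proof -
    have "(-1 *\<^sub>R x, -1 * b) \<in> M" using Msc[OF that(2), of "-1"] by simp
    then have 1: "(x + -1 *\<^sub>R x, a + -1 * b) \<in> M" using Madd[OF that(1)] by fastforce
    have "(-1 *\<^sub>R x, -1 * a) \<in> M" using Msc[OF that(1), of "-1"] by simp
    then have 2: "(x + -1 *\<^sub>R x, b + -1 * a) \<in> M" using Madd[OF that(2)] by fastforce
    show ?thesis using Mbd[OF 1] Mbd[OF 2] by simp
  qed
  have total: "\<exists>a. (x, a) \<in> M" for x
  proof (rule ccontr)
    assume nx: "\<not> (\<exists>a. (x, a) \<in> M)"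
    define D where "D = {snd p - B * norm (fst p - x) | p. p \<in> M}"
    have key: "snd p - B * norm (fst p - x) \<le> B * norm (fst q + x) - snd q"
      if "p \<in> M" "q \<in> M" for p q
    proof -
      have "snd p + snd q \<le> B * norm (fst p + fst q)" using Mbd[OF Madd[OF that]] by simp
      also have "norm (fst p + fst q) \<le> norm (fst p - x) + norm (fst q + x)"
        using norm_triangle_ineq[of "fst p - x" "fst q + x"] by simp
      finally show ?thesis using B
        by (smt (verit, ccfv_SIG) mult_left_mono distrib_left)
    qed
    have Dne: "D \<noteq> {}" using M0 D_def by auto
    have Dbd: "bdd_above D"
      unfolding D_def bdd_above_def using key[OF _ M0] by (auto intro!: exI[of _ "B*norm x"])
    define c where "c = Sup D"
    have c_ge: "snd p - B * norm (fst p - x) \<le> c" if "p \<in> M" for p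
      unfolding c_def using that Dbd by (intro cSup_upper) (auto simp: D_def intro!: exI[of _ "fst p"] exI[of _ "snd p"])
    have c_le: "c \<le> B * norm (fst q + x) - snd q" if "q \<in> M" for q
      unfolding c_def using Dne key[OF _ that] by (intro cSup_least) (auto simp: D_def)
    define M' where "M' = {(fst p + t *\<^sub>R x, snd p + t * c) | p t. p \<in> M}"
    have M'I: "(fst p + t *\<^sub>R x, snd p + t * c) \<in> M'" if "p \<in> M" for p t
      unfolding M'_def using that by blast
    have "P M'"
      unfolding P_def
    proof (intro conjI ballI allI)
      fix y assume "y \<in> V"
      then show "(y, f y) \<in> M'" using M'I[OF MV[of y], of 0] by simp
    next
      fix p' q' assume "p' \<in> M'" "q' \<in> M'"
      then obtain p t q s where pq: "p \<in> M" "q \<in> M" "p' = (fst p + t *\<^sub>R x, snd p + t * c)"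
        "q' = (fst q + s *\<^sub>R x, snd q + s * c)" unfolding M'_def by blast
      show "(fst p' + fst q', snd p' + snd q') \<in> M'"
        using M'I[OF Madd[OF pq(1,2)], of "t + s"] pq(3,4)
        by (simp add: algebra_simps scaleR_add_left)
    next
      fix p' d assume "p' \<in> M'"
      then obtain p t where pq: "p \<in> M" "p' = (fst p + t *\<^sub>R x, snd p + t * c)"
        unfolding M'_def by blast
      show "(d *\<^sub>R fst p', d * snd p') \<in> M'"
        using M'I[OF Msc[OF pq(1), of d], of "d * t"] pq(2)
        by (simp add: algebra_simps scaleR_add_right)
    next
      fix p' assume "p' \<in> M'"
      then obtain p t where pq: "p \<in> M" "p' = (fst p + t *\<^sub>R x, snd p + t * c)"
        unfolding M'_def by blast
      have "snd p + t * c \<le> B * norm (fst p + t *\<^sub>R x)"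
      proof (cases "t = 0")
        case True then show ?thesis using Mbd[OF pq(1)] by simp
      next
        case False
        define q where "q = ((1/t) *\<^sub>R fst p, (1/t) * snd p)"
        have qM: "q \<in> M" unfolding q_def using Msc[OF pq(1), of "1/t"] by simp
        have nq: "norm (fst p + t *\<^sub>R x) = \<bar>t\<bar> * norm ((1/t) *\<^sub>R fst p + x)"
        proof -
          have "fst p + t *\<^sub>R x = t *\<^sub>R ((1/t) *\<^sub>R fst p + x)"
            using False by (simp add: scaleR_add_right)
          then show ?thesis by simp
        qed
        define q2 where "q2 = ((-1/t) *\<^sub>R fst p, (-1/t) * snd p)"
        have q2M: "q2 \<in> M" unfolding q2_def using Msc[OF pq(1), of "-1/t"] by simp
        have nq2: "norm (fst p + t *\<^sub>R x) = \<bar>t\<bar> * norm ((-1/t) *\<^sub>R fst p - x)"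
        proof -
          have "fst p + t *\<^sub>R x = (-t) *\<^sub>R ((-1/t) *\<^sub>R fst p - x)"
            using False by (simp add: algebra_simps)
          then show ?thesis by simp
        qed
        show ?thesis
        proof (cases "t > 0")
          case True
          have "c \<le> B * norm ((1/t) *\<^sub>R fst p + x) - (1/t) * snd p"
            using c_le[OF qM] by (simp add: q_def)
          then have "t * c \<le> t * (B * norm ((1/t) *\<^sub>R fst p + x) - (1/t) * snd p)"
            using True by (intro mult_left_mono) auto
          then show ?thesis using True nq by (simp add: algebra_simps)
        next
          case False
          then have tn: "t < 0" using \<open>t \<noteq> 0\<close> by auto
          have "(-1/t) * snd p - B * norm ((-1/t) *\<^sub>R fst p - x) \<le> c"
            using c_ge[OF q2M] by (simp add: q2_def)
          then have "(-t) * ((-1/t) * snd p - B * norm ((-1/t) *\<^sub>R fst p - x)) \<le> (-t) * c"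
            using tn by (intro mult_left_mono) auto
          then show ?thesis using tn nq2 by (simp add: algebra_simps)
        qed
      qed
      then show "snd p' \<le> B * norm (fst p')" using pq by simp
    qed
    moreover have "M \<subseteq> M'"
    proof
      fix p assume "p \<in> M"
      then show "p \<in> M'" using M'I[of p 0] by simp
    qed
    ultimately have "M' = M" using Mmax A_def by auto
    moreover have "(x, c) \<in> M'" using M'I[OF M0, of 1] by simp
    ultimately show False using nx by auto
  qed
  define g where "g x = (SOME a. (x, a) \<in> M)" for x
  have gM: "(x, g x) \<in> M" for x unfolding g_def using total[of x] by (rule someI_ex)
  have gadd: "g (x + y) = g x + g y" for x y
    using Mfun[OF gM[of "x+y"]] Madd[OF gM[of x] gM[of y]] by simp
  have gsc: "g (a *\<^sub>R x) = a * g x" for a x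
    using Mfun[OF gM] Msc[OF gM[of x], of a] by simp
  have gV: "g x = f x" if "x \<in> V" for x using Mfun[OF gM MV[OF that]] .
  have gb: "\<bar>g x\<bar> \<le> B * norm x" for x
  proof -
    have "g x \<le> B * norm x" using Mbd[OF gM[of x]] by simp
    moreover have "g (-1 *\<^sub>R x) \<le> B * norm (-1 *\<^sub>R x)" using Mbd[OF gM[of "-1 *\<^sub>R x"]] by simp
    then have "- g x \<le> B * norm x" using gsc[of "-1" x] by simp
    ultimately show ?thesis by linarith
  qed
  show ?thesis using gadd gsc gV gb by blast
qed



lemma cont_nat: "continuous_on UNIV (g :: nat \<Rightarrow> real)"
  by (simp add: continuous_on_discrete)

definition mk :: "(nat \<Rightarrow> real) \<Rightarrow> linf" where "mk g = Bcontfun g"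

lemma mk_apply: assumes "\<And>n. \<bar>g n\<bar> \<le> B" shows "apply_bcontfun (mk g) n = g n"
proof -
  have "g \<in> bcontfun" using assms by (intro bcontfun_normI[OF cont_nat]) auto
  then show ?thesis by (simp add: mk_def Bcontfun_inverse)
qed

lemma mk_norm: assumes "\<And>n. \<bar>g n\<bar> \<le> B" shows "norm (mk g) \<le> B"
  using assms by (intro norm_bound) (simp add: mk_apply[OF assms])

lemma abs_le_norm: "\<bar>apply_bcontfun x n\<bar> \<le> norm x"
  using norm_bounded[of x n] by simp

lemma norm_le: "(\<And>n. \<bar>apply_bcontfun x n\<bar> \<le> B) \<Longrightarrow> norm x \<le> B"
  by (intro norm_bound) simp

lemma apply_sum: "apply_bcontfun (sum F A) n = (\<Sum>a\<in>A. apply_bcontfun (F a) n)"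
  by (induction A rule: infinite_finite_induct) auto

lemma unitvec_apply: "apply_bcontfun (unitvec n) k = (if k = n then 1 else 0)"
proof -
  have "apply_bcontfun (mk (\<lambda>k. if k = n then 1 else 0)) k = (if k = n then 1 else 0)"
    by (rule mk_apply[of _ 1]) auto
  then show ?thesis by (simp add: unitvec_def mk_def)
qed

lemma c0_iff: "x \<in> c0 \<longleftrightarrow> (\<lambda>n. apply_bcontfun x n) \<longlonglongrightarrow> 0"
  by (simp add: c0_def)

lemma subspace_c0: "subspace c0"
  unfolding subspace_def c0_iff
proof (intro conjI ballI allI)
  show "(\<lambda>n. apply_bcontfun 0 n) \<longlonglongrightarrow> 0" by simp
next
  fix x y assume "x \<in> c0" "y \<in> c0"
  then have "(\<lambda>n. apply_bcontfun x n + apply_bcontfun y n) \<longlonglongrightarrow> 0 + 0"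
    unfolding c0_iff by (intro tendsto_add)
  then show "(\<lambda>n. apply_bcontfun (x + y) n) \<longlonglongrightarrow> 0" by simp
next
  fix c x assume "x \<in> c0"
  then have "(\<lambda>n. c * apply_bcontfun x n) \<longlonglongrightarrow> c * 0"
    unfolding c0_iff by (intro tendsto_mult tendsto_const)
  then show "(\<lambda>n. apply_bcontfun (c *\<^sub>R x) n) \<longlonglongrightarrow> 0" by simp
qed

lemma unitvec_c0: "unitvec n \<in> c0"
proof -
  have "eventually (\<lambda>k. apply_bcontfun (unitvec n) k = 0) sequentially"
    by (rule eventually_sequentiallyI[of "Suc n"]) (simp add: unitvec_apply)
  then show ?thesis unfolding c0_iff by (simp add: tendsto_eventually)
qed

lemma lin_sum:
  assumes S: "subspace S" and f: "linear_on_set S f" and x: "\<forall>i\<in>A. x i \<in> S" and A: "finite A"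
  shows "f (\<Sum>i\<in>A. c i *\<^sub>R x i) = (\<Sum>i\<in>A. c i * f (x i))
     \<and> (\<Sum>i\<in>A. c i *\<^sub>R x i) \<in> S"
  using A x
proof (induction A rule: finite_induct)
  case empty
  have "f (0 *\<^sub>R 0) = 0 * f 0" using f subspace_0[OF S] unfolding linear_on_set_def
    by (metis real_scaleR_def)
  then show ?case using subspace_0[OF S] by simp
next
  case (insert a A)
  then have IH: "f (\<Sum>i\<in>A. c i *\<^sub>R x i) = (\<Sum>i\<in>A. c i * f (x i))" "(\<Sum>i\<in>A. c i *\<^sub>R x i) \<in> S"
    by auto
  have xa: "c a *\<^sub>R x a \<in> S" using insert S by (simp add: subspace_mul)
  have "f (\<Sum>i\<in>insert a A. c i *\<^sub>R x i) = f (c a *\<^sub>R x a + (\<Sum>i\<in>A. c i *\<^sub>R x i))"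
    using insert by simp
  also have "\<dots> = f (c a *\<^sub>R x a) + f (\<Sum>i\<in>A. c i *\<^sub>R x i)"
    using f xa IH(2) unfolding linear_on_set_def by blast
  also have "f (c a *\<^sub>R x a) = c a * f (x a)" using f insert unfolding linear_on_set_def
    by (metis insert_iff real_scaleR_def)
  finally show ?case using insert IH S xa by (simp add: subspace_add)
qed

lemma l1_bound:
  assumes f: "linear_on_set c0 f" and bd: "\<forall>x\<in>c0. \<bar>f x\<bar> \<le> B * norm x" and B: "0 \<le> B"
  shows "summable (\<lambda>n. \<bar>f (unitvec n)\<bar>) \<and> (\<Sum>n. \<bar>f (unitvec n)\<bar>) \<le> B"
proof -
  have ps: "(\<Sum>n<N. \<bar>f (unitvec n)\<bar>) \<le> B" for N
  proof -
    define v where "v = (\<Sum>i<N. sgn (f (unitvec i)) *\<^sub>R unitvec i)"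
    have L: "f v = (\<Sum>i<N. sgn (f (unitvec i)) * f (unitvec i)) \<and> v \<in> c0"
      unfolding v_def by (rule lin_sum[OF subspace_c0 f]) (auto simp: unitvec_c0)
    have "norm v \<le> 1"
    proof (rule norm_le)
      fix k
      have "apply_bcontfun v k = (\<Sum>i<N. sgn (f (unitvec i)) * (if k = i then 1 else 0))"
        unfolding v_def apply_sum by (simp add: unitvec_apply)
      also have "\<dots> = (if k < N then sgn (f (unitvec k)) else 0)"
        by (simp add: if_distrib[where f="\<lambda>x. _ * x"] sum.delta cong: if_cong)
      finally show "\<bar>apply_bcontfun v k\<bar> \<le> 1" by (auto simp: abs_sgn_eq)
    qed
    have "(\<Sum>n<N. \<bar>f (unitvec n)\<bar>) = f v" proof -
      have "\<And>i. sgn (f (unitvec i)) * f (unitvec i) = \<bar>f (unitvec i)\<bar>" by (simp add: sgn_if abs_if)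
      then show ?thesis using L by simp
    qed
    also have "\<dots> \<le> \<bar>f v\<bar>" by simp
    also have "\<dots> \<le> B * norm v" using bd L by blast
    also have "\<dots> \<le> B" using \<open>norm v \<le> 1\<close> B by (simp add: mult_left_le)
    finally show ?thesis .
  qed
  have s: "summable (\<lambda>n. \<bar>f (unitvec n)\<bar>)" by (rule summableI_nonneg_bounded[OF _ ps]) simp
  then show ?thesis using suminf_le_const[OF s ps] by simp
qed



lemma ext_op:
  fixes T :: "linf \<Rightarrow> linf"
  assumes V: "subspace V" and lin: "linear_on_set V T"
    and bd: "\<forall>x\<in>V. norm (T x) \<le> B * norm x" and B: "0 \<le> B"
  shows "\<exists>U. linear U \<and> (\<forall>x\<in>V. U x = T x) \<and> (\<forall>x. norm (U x) \<le> B * norm x)"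
proof -
  have "\<forall>n. \<exists>g. (\<forall>x y. g (x+y) = g x + g y) \<and> (\<forall>a x. g (a *\<^sub>R x) = a * g x)
           \<and> (\<forall>x\<in>V. g x = apply_bcontfun (T x) n) \<and> (\<forall>x. \<bar>g x\<bar> \<le> B * norm x)"
  proof
    fix n
    show "\<exists>g. (\<forall>x y. g (x+y) = g x + g y) \<and> (\<forall>a x. g (a *\<^sub>R x) = a * g x)
           \<and> (\<forall>x\<in>V. g x = apply_bcontfun (T x) n) \<and> (\<forall>x. \<bar>g x\<bar> \<le> B * norm x)"
    proof (rule HB_ext[OF V _ _ B])
      show "linear_on_set V (\<lambda>x. apply_bcontfun (T x) n)"
        using lin unfolding linear_on_set_def by simp
      show "\<forall>x\<in>V. apply_bcontfun (T x) n \<le> B * norm x"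
        using bd abs_le_norm[of "T _" n] by (meson abs_le_D1 order_trans)
    qed
  qed
  then obtain g where g: "\<And>n x y. g n (x+y) = g n x + g n y" "\<And>n a x. g n (a *\<^sub>R x) = a * g n x"
    "\<And>n x. x \<in> V \<Longrightarrow> g n x = apply_bcontfun (T x) n" "\<And>n x. \<bar>g n x\<bar> \<le> B * norm x"
    by metis
  define U where "U x = mk (\<lambda>n. g n x)" for x
  have Uap: "apply_bcontfun (U x) n = g n x" for x n
    unfolding U_def by (rule mk_apply[OF g(4)])
  have "linear U"
    by (rule linearI) (auto intro!: bcontfun_eqI simp: Uap g(1,2))
  moreover have "\<forall>x\<in>V. U x = T x"
    by (auto intro!: bcontfun_eqI simp: Uap g(3))
  moreover have "\<forall>x. norm (U x) \<le> B * norm x"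
    unfolding U_def by (auto intro!: mk_norm g(4))
  ultimately show ?thesis by blast
qed

lemma banach_limit:
  "\<exists>L. (\<forall>x y. L (x+y) = L x + L y) \<and> (\<forall>a x. L (a *\<^sub>R x) = a * L x)
      \<and> (\<forall>x. convergent (\<lambda>n. apply_bcontfun x n) \<longrightarrow> L x = lim (\<lambda>n. apply_bcontfun x n))
      \<and> (\<forall>x::linf. \<bar>L x\<bar> \<le> 1 * norm x)"
proof -
  let ?V = "{x::linf. convergent (\<lambda>n. apply_bcontfun x n)}"
  have 1: "subspace ?V"
    unfolding subspace_def
  proof (intro conjI ballI allI)
    show "0 \<in> ?V" by (simp add: convergent_const)
  next
    fix x y assume "x \<in> ?V" "y \<in> ?V"
    then show "x + y \<in> ?V" by (simp add: convergent_add)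
  next
    fix c x assume "x \<in> ?V"
    then show "c *\<^sub>R x \<in> ?V" by (simp add: convergent_mult_const_iff convergent_mult convergent_const)
  qed
  have 2: "linear_on_set ?V (\<lambda>x. lim (\<lambda>n. apply_bcontfun x n))"
    unfolding linear_on_set_def
  proof (intro conjI ballI allI)
    fix x y assume "x \<in> ?V" "y \<in> ?V"
    then obtain a b where "(\<lambda>n. apply_bcontfun x n) \<longlonglongrightarrow> a" "(\<lambda>n. apply_bcontfun y n) \<longlonglongrightarrow> b"
      by (auto simp: convergent_def)
    then show "lim (\<lambda>n. apply_bcontfun (x + y) n) = lim (\<lambda>n. apply_bcontfun x n) + lim (\<lambda>n. apply_bcontfun y n)"
      by (simp add: limI tendsto_add)
  next
    fix c x assume "x \<in> ?V"
    then obtain a where "(\<lambda>n. apply_bcontfun x n) \<longlonglongrightarrow> a" by (auto simp: convergent_def)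
    then show "lim (\<lambda>n. apply_bcontfun (c *\<^sub>R x) n) = c *\<^sub>R lim (\<lambda>n. apply_bcontfun x n)"
      by (simp add: limI tendsto_mult tendsto_const)
  qed
  have 3: "\<forall>x\<in>?V. lim (\<lambda>n. apply_bcontfun x n) \<le> 1 * norm x"
  proof
    fix x assume "x \<in> ?V"
    then obtain a where a: "(\<lambda>n. apply_bcontfun x n) \<longlonglongrightarrow> a" by (auto simp: convergent_def)
    have "a \<le> norm x"
      by (rule tendsto_le[OF trivial_limit_sequentially tendsto_const a])
         (auto simp: abs_le_D1[OF abs_le_norm])
    then show "lim (\<lambda>n. apply_bcontfun x n) \<le> 1 * norm x" using a by (simp add: limI)
  qed
  show ?thesis using HB_ext[OF 1 2 3] by auto
qed



abbreviation ap :: "linf \<Rightarrow> nat \<Rightarrow> real" where "ap \<equiv> apply_bcontfun"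

definition Rk :: "nat \<Rightarrow> linf \<Rightarrow> linf" where "Rk k x = mk (\<lambda>j. ap x (prod_encode (k,j)))"
definition bop :: "(linf \<Rightarrow> real) \<Rightarrow> linf \<Rightarrow> linf" where "bop L x = mk (\<lambda>k. L (Rk k x))"
definition Jop :: "linf \<Rightarrow> linf" where "Jop u = mk (\<lambda>n. ap u (fst (prod_decode n)))"
definition il :: "linf \<Rightarrow> linf \<Rightarrow> linf" where
  "il u v = mk (\<lambda>n. if even n then ap u (n div 2) else ap v (n div 2))"
definition evp :: "linf \<Rightarrow> linf" where "evp x = mk (\<lambda>n. ap x (2*n))"
definition odp :: "linf \<Rightarrow> linf" where "odp x = mk (\<lambda>n. ap x (2*n+1))"

lemma Rk_ap: "ap (Rk k x) j = ap x (prod_encode (k,j))"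
  unfolding Rk_def by (rule mk_apply[OF abs_le_norm])
lemma Rk_add: "Rk k (x + y) = Rk k x + Rk k y"
  by (rule bcontfun_eqI) (simp add: Rk_ap)
lemma Rk_scale: "Rk k (a *\<^sub>R x) = a *\<^sub>R Rk k x"
  by (rule bcontfun_eqI) (simp add: Rk_ap)
lemma Rk_norm: "norm (Rk k x) \<le> norm x"
  unfolding Rk_def by (rule mk_norm[OF abs_le_norm])

lemma strict_mono_pe: "strict_mono (\<lambda>j. prod_encode (k, j))"
proof (rule strict_monoI_Suc)
  fix j
  show "prod_encode (k, j) < prod_encode (k, Suc j)"
    by (simp add: prod_encode_def triangle_def)
qed

lemma Rk_c0: assumes "x \<in> c0" shows "(\<lambda>j. ap (Rk k x) j) \<longlonglongrightarrow> 0"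
proof -
  have "((\<lambda>n. ap x n) \<circ> (\<lambda>j. prod_encode (k, j))) \<longlonglongrightarrow> 0"
    using assms unfolding c0_iff by (rule LIMSEQ_subseq_LIMSEQ[OF _ strict_mono_pe])
  then show ?thesis by (simp add: Rk_ap o_def)
qed

lemma Jop_ap: "ap (Jop u) n = ap u (fst (prod_decode n))"
  unfolding Jop_def by (rule mk_apply[OF abs_le_norm])
lemma Jop_add: "Jop (x + y) = Jop x + Jop y"
  by (rule bcontfun_eqI) (simp add: Jop_ap)
lemma Jop_scale: "Jop (a *\<^sub>R x) = a *\<^sub>R Jop x"
  by (rule bcontfun_eqI) (simp add: Jop_ap)
lemma Jop_norm: "norm (Jop x) \<le> norm x"
  unfolding Jop_def by (rule mk_norm[OF abs_le_norm])
lemma Jop_0: "Jop 0 = 0"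
  by (rule bcontfun_eqI) (simp add: Jop_ap)
lemma Rk_Jop: "ap (Rk k (Jop u)) j = ap u k"
  by (simp add: Rk_ap Jop_ap)

lemma il_bd: "\<bar>(if even n then ap u (n div 2) else ap v (n div 2))\<bar> \<le> norm u + norm v"
  using abs_le_norm[of u "n div 2"] abs_le_norm[of v "n div 2"] norm_ge_zero[of u] norm_ge_zero[of v]
  by auto
lemma il_ap: "ap (il u v) n = (if even n then ap u (n div 2) else ap v (n div 2))"
  unfolding il_def by (rule mk_apply[OF il_bd])
lemma il_add: "il (u1 + u2) (v1 + v2) = il u1 v1 + il u2 v2"
  by (rule bcontfun_eqI) (simp add: il_ap)
lemma il_scale: "il (a *\<^sub>R u) (a *\<^sub>R v) = a *\<^sub>R il u v"
  by (rule bcontfun_eqI) (simp add: il_ap)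
lemma il_norm: "norm (il u v) \<le> norm u + norm v"
  unfolding il_def by (rule mk_norm[OF il_bd])
lemma il_0: "il 0 0 = 0"
  by (rule bcontfun_eqI) (simp add: il_ap)

lemma evp_ap: "ap (evp x) n = ap x (2*n)"
  unfolding evp_def by (rule mk_apply[OF abs_le_norm])
lemma odp_ap: "ap (odp x) n = ap x (2*n+1)"
  unfolding odp_def by (rule mk_apply[OF abs_le_norm])
lemma evp_norm: "norm (evp x) \<le> norm x"
  unfolding evp_def by (rule mk_norm[OF abs_le_norm])
lemma odp_norm: "norm (odp x) \<le> norm x"
  unfolding odp_def by (rule mk_norm[OF abs_le_norm])
lemma evp_il: "evp (il u v) = u"
  by (rule bcontfun_eqI) (simp add: evp_ap il_ap)
lemma odp_il: "odp (il u v) = v"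
  by (rule bcontfun_eqI) (simp add: odp_ap il_ap)

locale blim =
  fixes L :: "linf \<Rightarrow> real"
  assumes Ladd: "\<And>x y. L (x+y) = L x + L y" and Lsc: "\<And>a x. L (a *\<^sub>R x) = a * L x"
    and Llim: "\<And>x. convergent (\<lambda>n. ap x n) \<Longrightarrow> L x = lim (\<lambda>n. ap x n)"
    and Lbd: "\<And>x. \<bar>L x\<bar> \<le> 1 * norm x"
begin

lemma bop_bd: "\<bar>L (Rk k x)\<bar> \<le> norm x"
  using Lbd[of "Rk k x"] Rk_norm[of k x] by simp
lemma bop_ap: "ap (bop L x) k = L (Rk k x)"
  unfolding bop_def by (rule mk_apply[OF bop_bd])
lemma bop_add: "bop L (x + y) = bop L x + bop L y"
  by (rule bcontfun_eqI) (simp add: bop_ap Rk_add Ladd)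
lemma bop_scale: "bop L (a *\<^sub>R x) = a *\<^sub>R bop L x"
  by (rule bcontfun_eqI) (simp add: bop_ap Rk_scale Lsc)
lemma bop_diff: "bop L (x - y) = bop L x - bop L y"
  using bop_add[of x "-1 *\<^sub>R y"] bop_scale[of "-1" y] by simp
lemma bop_norm: "norm (bop L x) \<le> norm x"
  unfolding bop_def by (rule mk_norm[OF bop_bd])
lemma bop_c0: assumes "x \<in> c0" shows "bop L x = 0"
proof (rule bcontfun_eqI)
  fix k
  have "L (Rk k x) = lim (\<lambda>n. ap (Rk k x) n)"
    using Rk_c0[OF assms] by (intro Llim) (auto simp: convergent_def)
  also have "\<dots> = 0" using Rk_c0[OF assms] by (rule limI)
  finally show "ap (bop L x) k = ap 0 k" by (simp add: bop_ap)
qed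
lemma bop_J: "bop L (Jop u) = u"
proof (rule bcontfun_eqI)
  fix k
  have c: "(\<lambda>n. ap (Rk k (Jop u)) n) \<longlonglongrightarrow> ap u k" by (simp add: Rk_Jop)
  have "L (Rk k (Jop u)) = lim (\<lambda>n. ap (Rk k (Jop u)) n)"
    using c by (intro Llim) (auto simp: convergent_def)
  also have "\<dots> = ap u k" using c by (rule limI)
  finally show "ap (bop L (Jop u)) k = ap u k" by (simp add: bop_ap)
qed

end



lemma embed:
  fixes T0 :: "linf \<Rightarrow> linf"
  assumes W: "subspace W" and T0lin: "linear_on_set W T0" and T0im: "T0 ` W = c0"
    and c: "0 < c" and bds: "\<forall>x\<in>W. c * norm x \<le> norm (T0 x) \<and> norm (T0 x) \<le> C * norm x"
  shows "\<exists>\<Phi>. linear \<Phi> \<and> (\<exists>M\<ge>0. \<forall>y. norm (\<Phi> y) \<le> M * norm y)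
             \<and> (\<exists>m>0. \<forall>y. m * norm y \<le> norm (\<Phi> y)) \<and> (\<forall>w\<in>W. \<Phi> w = T0 w)"
proof -
  define C' where "C' = max C 0"
  have C': "0 \<le> C'" unfolding C'_def by simp
  have T0bd: "\<forall>x\<in>W. norm (T0 x) \<le> C' * norm x"
    using bds unfolding C'_def by (meson max.cobounded1 mult_right_mono norm_ge_zero order_trans)
  obtain U where Ulin: "linear U" and UW: "\<forall>x\<in>W. U x = T0 x" and Ubd: "\<forall>x. norm (U x) \<le> C' * norm x"
    using ext_op[OF W T0lin T0bd C'] by blast
  have T0add: "T0 (x + y) = T0 x + T0 y" if "x \<in> W" "y \<in> W" for x y
    using T0lin that unfolding linear_on_set_def by blast
  have T0sc: "T0 (a *\<^sub>R x) = a *\<^sub>R T0 x" if "x \<in> W" for a x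
    using T0lin that unfolding linear_on_set_def by blast
  have T0diff: "T0 (x - y) = T0 x - T0 y" if "x \<in> W" "y \<in> W" for x y
  proof -
    have "T0 (x + (-1) *\<^sub>R y) = T0 x + (-1) *\<^sub>R T0 y"
      using T0add[OF that(1) subspace_mul[OF W that(2)], of "-1"] T0sc[OF that(2), of "-1"] by simp
    then show ?thesis by simp
  qed
  have inj: "inj_on T0 W"
  proof (rule inj_onI)
    fix x y assume xy: "x \<in> W" "y \<in> W" "T0 x = T0 y"
    have "c * norm (x - y) \<le> norm (T0 (x - y))" using bds subspace_diff[OF W xy(1,2)] by blast
    also have "\<dots> = 0" using T0diff[OF xy(1,2)] xy(3) by simp
    finally show "x = y" using c by (simp add: mult_le_0_iff)
  qed
  define Ui where "Ui = inv_into W T0"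
  have UiW: "Ui a \<in> W" if "a \<in> c0" for a using that T0im unfolding Ui_def by (metis inv_into_into)
  have T0Ui: "T0 (Ui a) = a" if "a \<in> c0" for a using that T0im unfolding Ui_def by (metis f_inv_into_f)
  have UiT0: "Ui (T0 w) = w" if "w \<in> W" for w unfolding Ui_def using inj that by (rule inv_into_f_f)
  have Uilin: "linear_on_set c0 Ui"
    unfolding linear_on_set_def
  proof (intro conjI ballI allI)
    fix a b assume ab: "a \<in> c0" "b \<in> c0"
    have "Ui (T0 (Ui a + Ui b)) = Ui a + Ui b" using UiT0 subspace_add[OF W UiW[OF ab(1)] UiW[OF ab(2)]] by blast
    then show "Ui (a + b) = Ui a + Ui b" using T0add[OF UiW[OF ab(1)] UiW[OF ab(2)]] T0Ui ab by simp
  next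
    fix r a assume a: "a \<in> c0"
    have "Ui (T0 (r *\<^sub>R Ui a)) = r *\<^sub>R Ui a" using UiT0 subspace_mul[OF W UiW[OF a]] by blast
    then show "Ui (r *\<^sub>R a) = r *\<^sub>R Ui a" using T0sc[OF UiW[OF a]] T0Ui a by simp
  qed
  have Uibd: "\<forall>a\<in>c0. norm (Ui a) \<le> (1/c) * norm a"
  proof
    fix a assume a: "a \<in> c0"
    have "c * norm (Ui a) \<le> norm a" using bds UiW[OF a] T0Ui[OF a] by metis
    then show "norm (Ui a) \<le> (1/c) * norm a" using c by (simp add: field_simps)
  qed
  obtain E where Elin: "linear E" and Ec0: "\<forall>a\<in>c0. E a = Ui a" and Ebd: "\<forall>x. norm (E x) \<le> (1/c) * norm x"
    using ext_op[OF subspace_c0 Uilin Uibd] c by auto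
  obtain L where Lp: "\<forall>x y. L (x+y) = L x + L y" "\<forall>a x. L (a *\<^sub>R x) = a * L x"
      "\<forall>x. convergent (\<lambda>n. ap x n) \<longrightarrow> L x = lim (\<lambda>n. ap x n)" "\<forall>x::linf. \<bar>L x\<bar> \<le> 1 * norm x"
    using banach_limit by blast
  interpret blim L using Lp by unfold_locales auto
  define ub where "ub y = bop L (U y)" for y
  define r where "r y = y - E (U y)" for y
  define \<Phi> where "\<Phi> y = U y - Jop (ub y) + Jop (il (ub y) (r y))" for y
  have ub_add: "ub (x + y) = ub x + ub y" for x y
    unfolding ub_def by (simp add: linear_add[OF Ulin] bop_add)
  have ub_sc: "ub (a *\<^sub>R x) = a *\<^sub>R ub x" for a x
    unfolding ub_def by (simp add: linear_scale[OF Ulin] bop_scale)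
  have r_add: "r (x + y) = r x + r y" for x y
    unfolding r_def by (simp add: linear_add[OF Ulin] linear_add[OF Elin])
  have r_sc: "r (a *\<^sub>R x) = a *\<^sub>R r x" for a x
    unfolding r_def by (simp add: linear_scale[OF Ulin] linear_scale[OF Elin] scaleR_diff_right)
  have "linear \<Phi>"
  proof (rule linearI)
    fix x y
    show "\<Phi> (x + y) = \<Phi> x + \<Phi> y"
      unfolding \<Phi>_def by (simp add: ub_add r_add il_add Jop_add linear_add[OF Ulin])
  next
    fix a x
    show "\<Phi> (a *\<^sub>R x) = a *\<^sub>R \<Phi> x"
      unfolding \<Phi>_def by (simp add: ub_sc r_sc il_scale Jop_scale linear_scale[OF Ulin] scaleR_diff_right scaleR_add_right)
  qed
  moreover have "\<exists>M\<ge>0. \<forall>y. norm (\<Phi> y) \<le> M * norm y"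
  proof (intro exI[of _ "3 * C' + 1 + C' / c"] conjI allI)
    show "0 \<le> 3 * C' + 1 + C' / c" using C' c by simp
  next
    fix y
    have u: "norm (U y) \<le> C' * norm y" using Ubd by blast
    have b: "norm (ub y) \<le> C' * norm y" unfolding ub_def using bop_norm[of "U y"] u by linarith
    have e: "norm (E (U y)) \<le> (1/c) * (C' * norm y)"
      using Ebd[rule_format, of "U y"] u c by (smt (verit) divide_nonneg_nonneg mult_left_mono norm_ge_zero)
    have rr: "norm (r y) \<le> norm y + (1/c) * (C' * norm y)"
      unfolding r_def using norm_triangle_ineq4[of y "E (U y)"] e by linarith
    have "norm (\<Phi> y) \<le> norm (U y) + norm (Jop (ub y)) + norm (Jop (il (ub y) (r y)))"
      unfolding \<Phi>_def by (meson norm_triangle_ineq4 norm_triangle_le add_mono order_refl)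
    also have "\<dots> \<le> C' * norm y + C' * norm y + (C' * norm y + (norm y + (1/c) * (C' * norm y)))"
      using u b rr Jop_norm[of "ub y"] Jop_norm[of "il (ub y) (r y)"] il_norm[of "ub y" "r y"] by linarith
    also have "\<dots> = (3 * C' + 1 + C' / c) * norm y" by (simp add: algebra_simps)
    finally show "norm (\<Phi> y) \<le> (3 * C' + 1 + C' / c) * norm y" .
  qed
  moreover have "\<exists>m>0. \<forall>y. m * norm y \<le> norm (\<Phi> y)"
  proof (intro exI[of _ "1 / (1 + 3 / c)"] conjI allI)
    have "0 < 3 / c" using c by simp
    then show "0 < 1 / (1 + 3 / c)" by (intro divide_pos_pos) linarith+
  next
    fix y
    define p where "p = \<Phi> y"
    have bp: "bop L p = il (ub y) (r y)"
      unfolding p_def \<Phi>_def by (simp add: bop_add bop_diff bop_J ub_def)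
    have n1: "norm (ub y) \<le> norm p" using evp_norm[of "bop L p"] bop_norm[of p] by (simp add: bp evp_il)
    have n2: "norm (r y) \<le> norm p" using odp_norm[of "bop L p"] bop_norm[of p] by (simp add: bp odp_il)
    have n3: "norm (Jop (il (ub y) (r y))) \<le> norm p" using Jop_norm[of "bop L p"] bop_norm[of p] by (simp add: bp)
    have Uy: "U y = p + Jop (ub y) - Jop (il (ub y) (r y))" unfolding p_def \<Phi>_def by simp
    have nU: "norm (U y) \<le> 3 * norm p"
    proof -
      have "norm (U y) \<le> norm p + norm (Jop (ub y)) + norm (Jop (il (ub y) (r y)))"
        unfolding Uy using norm_triangle_ineq4[of "p + Jop (ub y)" "Jop (il (ub y) (r y))"]
          norm_triangle_ineq[of p "Jop (ub y)"] by linarith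
      then show ?thesis using n1 n3 Jop_norm[of "ub y"] by linarith
    qed
    have yy: "y = r y + E (U y)" unfolding r_def by simp
    have "norm y \<le> norm (r y) + norm (E (U y))" by (subst yy) (rule norm_triangle_ineq)
    also have "\<dots> \<le> norm p + (1/c) * (3 * norm p)"
      using n2 Ebd[rule_format, of "U y"] nU c
      by (smt (verit) divide_nonneg_nonneg mult_left_mono norm_ge_zero)
    also have "\<dots> = (1 + 3 / c) * norm p" by (simp add: algebra_simps)
    finally have "norm y \<le> (1 + 3 / c) * norm p" .
    then show "1 / (1 + 3 / c) * norm y \<le> norm (\<Phi> y)"
      using c unfolding p_def by (simp add: field_simps)
  qed
  moreover have "\<forall>w\<in>W. \<Phi> w = T0 w"
  proof
    fix w assume w: "w \<in> W"
    have Tc: "T0 w \<in> c0" using T0im w by blast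
    have "ub w = 0" unfolding ub_def using UW w bop_c0[OF Tc] by simp
    moreover have "r w = 0" unfolding r_def using UW w Ec0 Tc UiT0[OF w] by simp
    ultimately show "\<Phi> w = T0 w" unfolding \<Phi>_def using UW w by (simp add: Jop_0 il_0)
  qed
  ultimately show ?thesis by blast
qed



lemma ap_diff_le: "\<bar>apply_bcontfun a n - apply_bcontfun b n\<bar> \<le> dist a b"
  using abs_le_norm[of "a - b" n] by (simp add: dist_norm)

lemma linf_complete:
  fixes f :: "nat \<Rightarrow> linf"
  assumes C: "Cauchy f"
  shows "\<exists>l. f \<longlonglongrightarrow> l"
proof -
  have pc: "Cauchy (\<lambda>k. apply_bcontfun (f k) n)" for n
    unfolding Cauchy_def
  proof (intro allI impI)
    fix e :: real assume "e > 0"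
    then obtain M where M: "\<forall>m\<ge>M. \<forall>k\<ge>M. dist (f m) (f k) < e" using C unfolding Cauchy_def by blast
    show "\<exists>M. \<forall>m\<ge>M. \<forall>k\<ge>M. dist (apply_bcontfun (f m) n) (apply_bcontfun (f k) n) < e"
      using M ap_diff_le by (metis dist_real_def le_less_trans)
  qed
  have "\<forall>n. \<exists>a. (\<lambda>k. apply_bcontfun (f k) n) \<longlonglongrightarrow> a"
    using pc Cauchy_convergent_iff convergent_def by blast
  then obtain g where g: "\<And>n. (\<lambda>k. apply_bcontfun (f k) n) \<longlonglongrightarrow> g n" by metis
  obtain K where K: "K > 0" "\<And>k. norm (f k) \<le> K" using Cauchy_Bseq[OF C] unfolding Bseq_def by blast
  have gK: "\<bar>g n\<bar> \<le> K" for n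
  proof (rule LIMSEQ_le_const2)
    show "(\<lambda>k. \<bar>apply_bcontfun (f k) n\<bar>) \<longlonglongrightarrow> \<bar>g n\<bar>" using g by (rule tendsto_rabs)
    show "\<exists>N. \<forall>k\<ge>N. \<bar>apply_bcontfun (f k) n\<bar> \<le> K" using abs_le_norm K(2) order_trans by blast
  qed
  define l where "l = mk g"
  have lap: "apply_bcontfun l n = g n" for n unfolding l_def by (rule mk_apply[OF gK])
  have "f \<longlonglongrightarrow> l"
  proof (rule metric_LIMSEQ_I)
    fix r :: real assume r: "r > 0"
    then obtain N where N: "\<forall>m\<ge>N. \<forall>k\<ge>N. dist (f m) (f k) < r/2"
      using C unfolding Cauchy_def by (meson half_gt_zero)
    show "\<exists>no. \<forall>k\<ge>no. dist (f k) l < r"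
    proof (intro exI[of _ N] allI impI)
      fix k assume k: "k \<ge> N"
      have "norm (f k - l) \<le> r/2"
      proof (rule norm_le)
        fix n
        have "\<bar>apply_bcontfun (f k) n - g n\<bar> \<le> r/2"
        proof (rule LIMSEQ_le_const2)
          show "(\<lambda>j. \<bar>apply_bcontfun (f k) n - apply_bcontfun (f j) n\<bar>) \<longlonglongrightarrow> \<bar>apply_bcontfun (f k) n - g n\<bar>"
            by (intro tendsto_rabs tendsto_diff tendsto_const g)
          show "\<exists>M. \<forall>j\<ge>M. \<bar>apply_bcontfun (f k) n - apply_bcontfun (f j) n\<bar> \<le> r/2"
            using N k ap_diff_le by (meson less_imp_le order_trans)
        qed
        then show "\<bar>apply_bcontfun (f k - l) n\<bar> \<le> r/2" by (simp add: lap)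
      qed
      then show "dist (f k) l < r" using r by (simp add: dist_norm)
    qed
  qed
  then show ?thesis by blast
qed



lemma dual_bound: assumes "h \<in> dual_sp B" shows "\<exists>K\<ge>0. \<forall>x\<in>B. \<bar>h x\<bar> \<le> K * norm x"
proof -
  obtain K where K: "\<forall>x\<in>B. \<bar>h x\<bar> \<le> K * norm x" using assms unfolding dual_sp_def by blast
  have "\<forall>x\<in>B. \<bar>h x\<bar> \<le> max K 0 * norm x"
    using K by (meson max.cobounded1 mult_right_mono norm_ge_zero order_trans)
  then show ?thesis by (intro exI[of _ "max K 0"]) auto
qed

lemma dual_comp:
  assumes T: "linear_on_set A T" and TA: "T ` A \<subseteq> B" and Tb: "\<forall>a\<in>A. norm (T a) \<le> K * norm a"
    and K: "0 \<le> K" and h: "h \<in> dual_sp B"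
  shows "(\<lambda>a. h (T a)) \<in> dual_sp A"
proof -
  obtain Kh where Kh: "Kh \<ge> 0" "\<forall>x\<in>B. \<bar>h x\<bar> \<le> Kh * norm x" using dual_bound[OF h] by blast
  have hl: "linear_on_set B h" using h unfolding dual_sp_def by blast
  have "linear_on_set A (\<lambda>a. h (T a))"
    unfolding linear_on_set_def
  proof (intro conjI ballI allI)
    fix x y assume "x \<in> A" "y \<in> A"
    then show "h (T (x + y)) = h (T x) + h (T y)"
      using T TA hl unfolding linear_on_set_def by (simp add: image_subset_iff)
  next
    fix a x assume "x \<in> A"
    then show "h (T (a *\<^sub>R x)) = a *\<^sub>R h (T x)"
      using T TA hl unfolding linear_on_set_def by (simp add: image_subset_iff)
  qed
  moreover have "\<forall>a\<in>A. \<bar>h (T a)\<bar> \<le> (Kh * K) * norm a"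
  proof
    fix a assume a: "a \<in> A"
    have "\<bar>h (T a)\<bar> \<le> Kh * norm (T a)" using Kh TA a by blast
    also have "\<dots> \<le> Kh * (K * norm a)" using Tb a Kh(1) by (simp add: mult_left_mono)
    finally show "\<bar>h (T a)\<bar> \<le> (Kh * K) * norm a" by simp
  qed
  ultimately show ?thesis unfolding dual_sp_def by blast
qed

lemma jb_eq: "j_bistar (linf_to_c0bidual z) f = (\<Sum>n. ap z n * f (unitvec n))"
  by (simp add: j_bistar_def linf_to_c0bidual_def j_star_def unitvec_c0)

lemma l1_dual: assumes "f \<in> dual_sp c0" shows "summable (\<lambda>n. \<bar>f (unitvec n)\<bar>)"
proof -
  obtain K where "K \<ge> 0" "\<forall>x\<in>c0. \<bar>f x\<bar> \<le> K * norm x" using dual_bound[OF assms] by blast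
  then show ?thesis using l1_bound[of f K] assms unfolding dual_sp_def by blast
qed

lemma summ_z: assumes "summable (\<lambda>n. \<bar>a n\<bar>)" shows "summable (\<lambda>n. ap z n * a n)"
proof (rule summable_comparison_test'[of "\<lambda>n. norm z * \<bar>a n\<bar>" 0])
  show "summable (\<lambda>n. norm z * \<bar>a n\<bar>)" using assms by (rule summable_mult)
  fix n show "norm (ap z n * a n) \<le> norm z * \<bar>a n\<bar>"
    using abs_le_norm[of z n] by (simp add: abs_mult mult_right_mono)
qed

theorem proposition3p4:
  fixes Y :: "linf set"
  assumes "closed_subspace Y"
    and "grothendieck Y"
    and "\<exists>W. W \<subseteq> Y \<and> closed_subspace W \<and> isomorphic_sub W c0"
  shows "\<exists>S. linf_grothendieck_subspace S \<and> isomorphic_sub S Y"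
proof -
  have Ysub: "subspace Y" and Ycl: "closed Y" using assms(1) unfolding closed_subspace_def by auto
  obtain W where WY: "W \<subseteq> Y" and Wcs: "closed_subspace W" and Wiso: "isomorphic_sub W c0"
    using assms(3) by blast
  have Wsub: "subspace W" using Wcs unfolding closed_subspace_def by auto
  obtain T0 c C where T0lin: "linear_on_set W T0" and T0im: "T0 ` W = c0" and c: "0 < c"
    and bds: "\<forall>x\<in>W. c * norm x \<le> norm (T0 x) \<and> norm (T0 x) \<le> C * norm x"
    using Wiso unfolding isomorphic_sub_def by blast
  obtain \<Phi> M m where \<Phi>lin: "linear \<Phi>" and M: "M \<ge> 0" "\<forall>y. norm (\<Phi> y) \<le> M * norm y"
    and m: "m > 0" "\<forall>y. m * norm y \<le> norm (\<Phi> y)" and \<Phi>W: "\<forall>w\<in>W. \<Phi> w = T0 w"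
    using embed[OF Wsub T0lin T0im c bds] by blast
  define S where "S = \<Phi> ` Y"
  have Ssub: "subspace S" unfolding S_def using \<Phi>lin Ysub by (rule linear_subspace_image)
  have bl: "bounded_linear \<Phi>"
    using linear_add[OF \<Phi>lin] linear_scale[OF \<Phi>lin] M(2)
    by (intro bounded_linear_intro[of _ M]) (auto simp: mult.commute)
  have c0S: "c0 \<subseteq> S"
  proof
    fix a assume "a \<in> c0"
    then obtain w where "w \<in> W" "a = T0 w" using T0im by blast
    then show "a \<in> S" unfolding S_def using WY \<Phi>W by force
  qed
  have inj: "inj_on \<Phi> Y"
  proof (rule inj_onI)
    fix x y assume "x \<in> Y" "y \<in> Y" "\<Phi> x = \<Phi> y"
    then have "m * norm (x - y) \<le> 0" using m(2)[rule_format, of "x - y"] linear_diff[OF \<Phi>lin] by simp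
    then show "x = y" using m(1) by (simp add: mult_le_0_iff)
  qed
  define T where "T = inv_into Y \<Phi>"
  have TPhi: "T (\<Phi> y) = y" if "y \<in> Y" for y unfolding T_def using inj that by (rule inv_into_f_f)
  have TS: "T s \<in> Y" "\<Phi> (T s) = s" if "s \<in> S" for s
    using that unfolding S_def T_def by (auto intro: inv_into_into f_inv_into_f)
  have Tlin: "linear_on_set S T"
    unfolding linear_on_set_def
  proof (intro conjI ballI allI)
    fix s t assume "s \<in> S" "t \<in> S"
    then obtain y1 y2 where "y1 \<in> Y" "y2 \<in> Y" "s = \<Phi> y1" "t = \<Phi> y2" unfolding S_def by blast
    then show "T (s + t) = T s + T t"
      using TPhi subspace_add[OF Ysub] linear_add[OF \<Phi>lin] by metis
  next
    fix a s assume "s \<in> S"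
    then obtain y1 where "y1 \<in> Y" "s = \<Phi> y1" unfolding S_def by blast
    then show "T (a *\<^sub>R s) = a *\<^sub>R T s"
      using TPhi subspace_mul[OF Ysub] linear_scale[OF \<Phi>lin] by metis
  qed
  have Tbd: "\<forall>s\<in>S. norm (T s) \<le> (1/m) * norm s"
  proof
    fix s assume "s \<in> S"
    then have "m * norm (T s) \<le> norm s" using m(2) TS by metis
    then show "norm (T s) \<le> (1/m) * norm s" using m(1) by (simp add: field_simps)
  qed
  have Scl: "closed S"
    unfolding closed_sequential_limits
  proof (intro allI impI)
    fix sq l assume H: "(\<forall>n. sq n \<in> S) \<and> sq \<longlonglongrightarrow> l"
    define yq where "yq n = T (sq n)" for n
    have yqY: "yq n \<in> Y" for n unfolding yq_def using H TS by blast
    have Pyq: "\<Phi> (yq n) = sq n" for n unfolding yq_def using H TS by blast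
    have Cs: "Cauchy sq" using H LIMSEQ_imp_Cauchy by blast
    have "Cauchy yq"
      unfolding Cauchy_def
    proof (intro allI impI)
      fix e :: real assume e: "e > 0"
      then obtain N where N: "\<forall>i\<ge>N. \<forall>j\<ge>N. dist (sq i) (sq j) < m * e"
        using Cs m(1) unfolding Cauchy_def by (meson mult_pos_pos)
      show "\<exists>N. \<forall>i\<ge>N. \<forall>j\<ge>N. dist (yq i) (yq j) < e"
      proof (intro exI[of _ N] allI impI)
        fix i j assume ij: "i \<ge> N" "j \<ge> N"
        have "m * norm (yq i - yq j) \<le> norm (\<Phi> (yq i - yq j))" using m(2) by blast
        also have "\<dots> = dist (sq i) (sq j)" by (simp add: linear_diff[OF \<Phi>lin] Pyq dist_norm)
        also have "\<dots> < m * e" using N ij by blast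
        finally show "dist (yq i) (yq j) < e" using m(1) by (simp add: dist_norm)
      qed
    qed
    then obtain y0 where y0: "yq \<longlonglongrightarrow> y0" using linf_complete by blast
    have "y0 \<in> Y" using Ycl y0 yqY unfolding closed_sequential_limits by blast
    moreover have "(\<lambda>n. \<Phi> (yq n)) \<longlonglongrightarrow> \<Phi> y0" by (rule bounded_linear.tendsto[OF bl y0])
    then have "sq \<longlonglongrightarrow> \<Phi> y0" by (simp add: Pyq)
    then have "l = \<Phi> y0" using H LIMSEQ_unique by blast
    ultimately show "l \<in> S" unfolding S_def by blast
  qed
  have TSY: "T ` S = Y"
  proof
    show "T ` S \<subseteq> Y" using TS by blast
    show "Y \<subseteq> T ` S" unfolding S_def using TPhi by force
  qed
  have Mp: "0 < 1 / (M + 1)" using M by simp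
  have bdS: "\<forall>s\<in>S. 1 / (M + 1) * norm s \<le> norm (T s) \<and> norm (T s) \<le> 1 / m * norm s"
  proof
    fix s assume s: "s \<in> S"
    have "norm s \<le> M * norm (T s)" using M(2) TS[OF s] by metis
    also have "\<dots> \<le> (M + 1) * norm (T s)" by (simp add: mult_right_mono)
    finally have "1 / (M + 1) * norm s \<le> norm (T s)" using M by (simp add: field_simps)
    then show "1 / (M + 1) * norm s \<le> norm (T s) \<and> norm (T s) \<le> 1 / m * norm s"
      using Tbd s by blast
  qed
  have iso: "isomorphic_sub S Y"
    unfolding isomorphic_sub_def using Tlin TSY Mp bdS by blast
  have conv: "linf_conv xs x"
    if xs: "\<forall>n. xs n \<in> dual_sp S" and x: "x \<in> dual_sp S" and wc: "weakstar_conv S xs x" for xs x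
  proof -
    have PhiY: "\<Phi> ` Y \<subseteq> S" unfolding S_def by simp
    have Philin: "linear_on_set Y \<Phi>"
      unfolding linear_on_set_def using linear_add[OF \<Phi>lin] linear_scale[OF \<Phi>lin] by auto
    define ys where "ys n = (\<lambda>v. xs n (\<Phi> v))" for n
    define y where "y = (\<lambda>v. x (\<Phi> v))"
    have ysd: "ys n \<in> dual_sp Y" for n
      unfolding ys_def using dual_comp[OF Philin PhiY _ M(1) xs[rule_format, of n]] M(2) by blast
    have yd: "y \<in> dual_sp Y"
      unfolding y_def using dual_comp[OF Philin PhiY _ M(1) x] M(2) by blast
    have ywc: "weakstar_conv Y ys y"
      using wc unfolding weakstar_conv_def ys_def y_def S_def by blast
    obtain g0 where g0: "g0 \<in> dual_sp Y" and wk: "weak_conv Y ys g0"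
      using assms(2) ysd yd ywc unfolding grothendieck_def by blast
    have g0y: "g0 v = x (\<Phi> v)" if v: "v \<in> Y" for v
    proof -
      have "(\<lambda>f. f v) \<in> bidual_sp Y"
        unfolding bidual_sp_def dual_ball_def using v by (auto intro!: exI[of _ "norm v"])
      then have "(\<lambda>n. (\<lambda>f. f v) (ys n)) \<longlonglongrightarrow> (\<lambda>f. f v) g0"
        using wk unfolding weak_conv_def by (rule bspec[rotated])
      then have 1: "(\<lambda>n. ys n v) \<longlonglongrightarrow> g0 v" by simp
      have 2: "(\<lambda>n. ys n v) \<longlonglongrightarrow> x (\<Phi> v)"
        using wc v unfolding weakstar_conv_def ys_def S_def by blast
      show ?thesis using LIMSEQ_unique[OF 1 2] .
    qed
    have TTS: "T ` c0 \<subseteq> Y" using TS c0S by blast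
    have Tlin0: "linear_on_set c0 T" using Tlin c0S unfolding linear_on_set_def by blast
    have Tbd0: "\<forall>a\<in>c0. norm (T a) \<le> (1/m) * norm a" using Tbd c0S by blast
    have summ: "summable (\<lambda>n. \<bar>h (T (unitvec n))\<bar>)" if "h \<in> dual_sp Y" for h
      using l1_dual[OF dual_comp[OF Tlin0 TTS Tbd0 _ that]] m(1) by simp
    show ?thesis
      unfolding linf_conv_def
    proof
      fix z :: linf
      define G where "G h = (\<Sum>n. ap z n * h (T (unitvec n)))" for h :: "linf \<Rightarrow> real"
      have "G \<in> bidual_sp Y"
        unfolding bidual_sp_def
      proof (intro CollectI conjI ballI allI)
        fix f g assume f: "f \<in> dual_sp Y" and g: "g \<in> dual_sp Y"
        show "G (\<lambda>x. f x + g x) = G f + G g"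
          unfolding G_def using suminf_add[OF summ_z[OF summ[OF f]] summ_z[OF summ[OF g]]]
          by (simp add: distrib_left)
      next
        fix a f assume f: "f \<in> dual_sp Y"
        show "G (\<lambda>x. a * f x) = a * G f"
          unfolding G_def using suminf_mult[OF summ_z[OF summ[OF f]], of a]
          by (simp add: algebra_simps)
      next
        show "\<exists>K. \<forall>f\<in>dual_ball Y. \<bar>G f\<bar> \<le> K"
        proof (intro exI[of _ "norm z * (1/m)"] ballI)
          fix f assume fb: "f \<in> dual_ball Y"
          have f: "f \<in> dual_sp Y" and fb1: "\<forall>v\<in>Y. \<bar>f v\<bar> \<le> norm v" using fb unfolding dual_ball_def by auto
          have fl: "linear_on_set c0 (\<lambda>a. f (T a))"
            using dual_comp[OF Tlin0 TTS Tbd0 _ f] m(1) unfolding dual_sp_def by simp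
          have fbd: "\<forall>a\<in>c0. \<bar>f (T a)\<bar> \<le> (1/m) * norm a"
            using fb1 TTS Tbd0 by (meson image_subset_iff order_trans)
          have s1: "(\<Sum>n. \<bar>f (T (unitvec n))\<bar>) \<le> 1/m"
            using l1_bound[OF fl fbd] m(1) by simp
          have sa: "summable (\<lambda>n. \<bar>f (T (unitvec n))\<bar>)" using summ[OF f] .
          have sz: "summable (\<lambda>n. \<bar>ap z n * f (T (unitvec n))\<bar>)"
          proof (rule summable_comparison_test'[of "\<lambda>n. norm z * \<bar>f (T (unitvec n))\<bar>" 0])
            show "summable (\<lambda>n. norm z * \<bar>f (T (unitvec n))\<bar>)" using sa by (rule summable_mult)
            fix n show "norm \<bar>ap z n * f (T (unitvec n))\<bar> \<le> norm z * \<bar>f (T (unitvec n))\<bar>"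
              using abs_le_norm[of z n] by (simp add: abs_mult mult_right_mono)
          qed
          have "\<bar>G f\<bar> \<le> (\<Sum>n. \<bar>ap z n * f (T (unitvec n))\<bar>)" unfolding G_def using sz by (rule summable_rabs)
          also have "\<dots> \<le> (\<Sum>n. norm z * \<bar>f (T (unitvec n))\<bar>)"
            by (rule suminf_le[OF _ sz summable_mult[OF sa]])
               (simp add: abs_mult mult_right_mono abs_le_norm)
          also have "\<dots> = norm z * (\<Sum>n. \<bar>f (T (unitvec n))\<bar>)" using suminf_mult[OF sa] by simp
          also have "\<dots> \<le> norm z * (1/m)" using s1 by (rule mult_left_mono) simp
          finally show "\<bar>G f\<bar> \<le> norm z * (1/m)" .
        qed
      qed
      then have lim: "(\<lambda>n. G (ys n)) \<longlonglongrightarrow> G g0" using wk unfolding weak_conv_def by blast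
      have eS: "unitvec k \<in> S" for k using c0S unitvec_c0 by blast
      have "G (ys n) = j_bistar (linf_to_c0bidual z) (xs n)" for n
        unfolding G_def ys_def jb_eq using TS(2)[OF eS] by simp
      moreover have "G g0 = j_bistar (linf_to_c0bidual z) x"
        unfolding G_def jb_eq using g0y TS[OF eS] by simp
      ultimately show "(\<lambda>n. j_bistar (linf_to_c0bidual z) (xs n)) \<longlonglongrightarrow> j_bistar (linf_to_c0bidual z) x"
        using lim by simp
    qed
  qed
  have "linf_grothendieck_subspace S"
    unfolding linf_grothendieck_subspace_def closed_subspace_def using Ssub Scl c0S conv by blast
  then show ?thesis using iso by blast
qed

end
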